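(* Let $A$ be a finite set of $m$ alternatives and $N=\{1,\dots,n\}$ a set of agents, with preferences ranging over all weak orders on $A$. If there is an anonymous and neutral social decision scheme $f$ that satisfies efficiency and strategyproofness for $m$ alternatives and $n$ agents, then for all $m'\le m$ and $n'\le n$ there is a social decision scheme $f'$ defined for $m'$ alternatives and $n'$ agents that is also anonymous, neutral, efficient, and strategyproof.
   Context: $\mathcal{R}$ denotes the set of all complete and transitive binary relations (weak preferences) on $A$; a preference profile is $R=(\succsim_1,\dots,\succsim_n)\in\mathcal{R}^N$. $\Delta(A)=\{p\in\mathbb{R}_{\ge0}^A:\sum_{x\in A}p(x)=1\}$. A social decision scheme (SDS) is a function $f\colon\mathcal{R}^N\to\Delta(A)$. For $R\in\mathcal{R}^N$, $i\in N$ and $\succsim\in\mathcal{R}$, $R_{i:\succsim}$ denotes the profile obtained from $R$ by replacing $\succsim_i$ with $\succsim$. Anonymity: $f(R)=f(R\circ\sigma)$ for all $R$ and all permutations $\sigma$ of the agents. Neutrality: $f(R)(x)=f(\pi(R))(\pi(x))$ for all $R$, permutations $\pi$ of the alternatives and $x$, where $\pi(R)$ replaces each $\succsim_i$ by $\succsim_i^\pi$ with $\pi(x)\succsim_i^\pi\pi(y)$ iff $x\succsim_i y$. A utility function $u_i\colon A\to\mathbb{R}$ is consistent with $\succsim_i$ if $u_i(x)\ge u_i(y)\iff x\succsim_i y$, extended to lotteries by expectation. A utility representation $u$ assigns to each profile $R$ utility functions $u^R_i$ consistent with $\succsim_i$. Lottery $p$ $u$-dominates $q$ at $R$ if $u^R_i(p)\ge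 u^R_i(q)$ for all $i$, with strict inequality for some $i$. $f$ is efficient if for no profile $R$ is $f(R)$ $u$-dominated at $R$ for every utility representation $u$. $f$ is manipulable if there are $R$, $i$, $\succsim$ with $u^R_i(f(R_{i:\succsim}))>u^R_i(f(R))$ for every utility representation $u$; $f$ is strategyproof if it is not manipulable. *)

theory Defs
  imports Complex_Main "HOL-Combinatorics.Permutations"
begin

text \<open>A weak preference on A is a complete and transitive binary relation on A, given as a
set of pairs (x,y) meaning x is weakly preferred to y. A profile assigns a weak
preference to every agent in N (and, for extensionality, the empty relation outside N).\<close>

type_synonym pref = "(nat \<times> nat) set"
type_synonym profile = "nat \<Rightarrow> pref"
type_synonym lottery = "nat \<Rightarrow> real"

definition alts :: "nat \<Rightarrow> nat set" where "alts m = {0..<m}"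
definition agents :: "nat \<Rightarrow> nat set" where "agents n = {0..<n}"

definition weak_pref :: "nat set \<Rightarrow> pref \<Rightarrow> bool" where
  "weak_pref A r \<longleftrightarrow> r \<subseteq> A \<times> A \<and> (\<forall>x\<in>A. \<forall>y\<in>A. (x,y) \<in> r \<or> (y,x) \<in> r) \<and> trans r"

definition profiles :: "nat set \<Rightarrow> nat set \<Rightarrow> profile set" where
  "profiles N A = {R. (\<forall>i\<in>N. weak_pref A (R i)) \<and> (\<forall>i. i \<notin> N \<longrightarrow> R i = {})}"

definition lotteries :: "nat set \<Rightarrow> lottery set" where
  "lotteries A = {p. (\<forall>x. 0 \<le> p x) \<and> (\<forall>x. x \<notin> A \<longrightarrow> p x = 0) \<and> sum p A = 1}"

definition is_sds :: "nat set \<Rightarrow> nat set \<Rightarrow> (profile \<Rightarrow> lottery) \<Rightarrow> bool" where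
  "is_sds N A f \<longleftrightarrow> (\<forall>R\<in>profiles N A. f R \<in> lotteries A)"

definition anonymous :: "nat set \<Rightarrow> nat set \<Rightarrow> (profile \<Rightarrow> lottery) \<Rightarrow> bool" where
  "anonymous N A f \<longleftrightarrow> (\<forall>R\<in>profiles N A. \<forall>\<sigma>. \<sigma> permutes N \<longrightarrow> f (R \<circ> \<sigma>) = f R)"

definition permute_profile :: "(nat \<Rightarrow> nat) \<Rightarrow> profile \<Rightarrow> profile" where
  "permute_profile \<pi> R = (\<lambda>i. map_prod \<pi> \<pi> ` R i)"

definition neutral :: "nat set \<Rightarrow> nat set \<Rightarrow> (profile \<Rightarrow> lottery) \<Rightarrow> bool" where
  "neutral N A f \<longleftrightarrow> (\<forall>R\<in>profiles N A. \<forall>\<pi>. \<pi> permutes A \<longrightarrow>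
      (\<forall>x\<in>A. f R x = f (permute_profile \<pi> R) (\<pi> x)))"

definition consistent :: "nat set \<Rightarrow> pref \<Rightarrow> (nat \<Rightarrow> real) \<Rightarrow> bool" where
  "consistent A r u \<longleftrightarrow> (\<forall>x\<in>A. \<forall>y\<in>A. u x \<ge> u y \<longleftrightarrow> (x,y) \<in> r)"

definition EU :: "nat set \<Rightarrow> (nat \<Rightarrow> real) \<Rightarrow> lottery \<Rightarrow> real" where
  "EU A u p = (\<Sum>x\<in>A. u x * p x)"

definition util_rep :: "nat set \<Rightarrow> nat set \<Rightarrow> (profile \<Rightarrow> nat \<Rightarrow> nat \<Rightarrow> real) \<Rightarrow> bool" where
  "util_rep N A U \<longleftrightarrow> (\<forall>R\<in>profiles N A. \<forall>i\<in>N. consistent A (R i) (U R i))"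

definition u_dominates ::
  "nat set \<Rightarrow> nat set \<Rightarrow> (profile \<Rightarrow> nat \<Rightarrow> nat \<Rightarrow> real) \<Rightarrow> profile \<Rightarrow> lottery \<Rightarrow> lottery \<Rightarrow> bool" where
  "u_dominates N A U R p q \<longleftrightarrow>
     (\<forall>i\<in>N. EU A (U R i) p \<ge> EU A (U R i) q) \<and> (\<exists>i\<in>N. EU A (U R i) p > EU A (U R i) q)"

definition efficient :: "nat set \<Rightarrow> nat set \<Rightarrow> (profile \<Rightarrow> lottery) \<Rightarrow> bool" where
  "efficient N A f \<longleftrightarrow> \<not> (\<exists>R\<in>profiles N A. \<forall>U. util_rep N A U \<longrightarrow>
      (\<exists>p\<in>lotteries A. u_dominates N A U R p (f R)))"

definition manipulable :: "nat set \<Rightarrow> nat set \<Rightarrow> (profile \<Rightarrow> lottery) \<Rightarrow> bool" where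
  "manipulable N A f \<longleftrightarrow> (\<exists>R\<in>profiles N A. \<exists>i\<in>N. \<exists>r. weak_pref A r \<and>
      (\<forall>U. util_rep N A U \<longrightarrow> EU A (U R i) (f (R(i := r))) > EU A (U R i) (f R)))"

definition strategyproof :: "nat set \<Rightarrow> nat set \<Rightarrow> (profile \<Rightarrow> lottery) \<Rightarrow> bool" where
  "strategyproof N A f \<longleftrightarrow> \<not> manipulable N A f"

definition good_sds :: "nat \<Rightarrow> nat \<Rightarrow> (profile \<Rightarrow> lottery) \<Rightarrow> bool" where
  "good_sds m n f \<longleftrightarrow> is_sds (agents n) (alts m) f \<and> anonymous (agents n) (alts m) f \<and>
     neutral (agents n) (alts m) f \<and> efficient (agents n) (alts m) f \<and>
     strategyproof (agents n) (alts m) f"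

end

theory Submission
  imports Defs
begin

lemma finite_alts[simp]: "finite (alts m)" by (simp add: alts_def)

lemma alts_mono: "m' \<le> m \<Longrightarrow> alts m' \<subseteq> alts m" by (auto simp: alts_def)

lemma EU_restrict:
  assumes "finite A" "A' \<subseteq> A" "\<forall>x\<in>A-A'. p x = 0" "\<forall>x\<in>A'. q x = p x"
  shows "EU A u p = EU A' u q"
proof -
  have "EU A u p = (\<Sum>x\<in>A'. u x * p x)" unfolding EU_def
    by (rule sum.mono_neutral_right) (use assms in auto)
  also have "\<dots> = EU A' u q" unfolding EU_def using assms(4) by simp
  finally show ?thesis .
qed

lemma EU_indiff:
  assumes "\<forall>x\<in>A. \<forall>y\<in>A. u x = u y" "p \<in> lotteries A" "q \<in> lotteries A"
  shows "EU A u p = EU A u q"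
proof (cases "A = {}")
  case True then show ?thesis using assms(2) by (simp add: lotteries_def)
next
  case False
  then obtain a where a: "a \<in> A" by blast
  have ua: "\<forall>x\<in>A. u x = u a" using assms(1) a by blast
  have key: "\<And>p. p \<in> lotteries A \<Longrightarrow> EU A u p = u a"
  proof -
    fix p assume p: "p \<in> lotteries A"
    have "EU A u p = (\<Sum>x\<in>A. u a * p x)" unfolding EU_def
      using ua by (intro sum.cong) auto
    also have "\<dots> = u a * sum p A" by (simp add: sum_distrib_left)
    also have "\<dots> = u a" using p by (simp add: lotteries_def)
    finally show "EU A u p = u a" .
  qed
  show ?thesis using key[OF assms(2)] key[OF assms(3)] by simp
qed

lemma EU_shift:
  assumes "finite A" "a \<in> A" "b \<in> A"
    "\<forall>x. p x = q x + (if x = a then d else 0) - (if x = b then d else 0)"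
  shows "EU A u p = EU A u q + d * (u a - u b)"
proof -
  have pw: "u x * p x = u x * q x + (if x = a then u a * d else 0) - (if x = b then u b * d else 0)" for x
  proof -
    have e: "p x = q x + (if x = a then d else 0) - (if x = b then d else 0)" by (rule assms(4)[rule_format])
    show ?thesis unfolding e by (cases "x = a"; cases "x = b") (simp_all add: algebra_simps)
  qed
  have "EU A u p = (\<Sum>x\<in>A. u x * q x + (if x = a then u a * d else 0) - (if x = b then u b * d else 0))"
    unfolding EU_def by (rule sum.cong) (simp_all add: pw)
  also have "\<dots> = EU A u q + u a * d - u b * d"
    using assms(1-3) by (simp add: sum_subtractf sum.distrib EU_def)
  finally show ?thesis by (simp add: algebra_simps)
qed

lemma zero_mass:
  assumes f: "good_sds m n f" and n: "n \<ge> 1" and R: "R \<in> profiles (agents n) (alts m)"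
    and a: "a \<in> alts m" and b: "b \<in> alts m"
    and pref: "\<forall>i\<in>agents n. (a,b) \<in> R i \<and> (b,a) \<notin> R i"
  shows "f R b = 0"
proof (rule ccontr)
  assume ne: "f R b \<noteq> 0"
  have lot: "f R \<in> lotteries (alts m)" using f R by (auto simp: good_sds_def is_sds_def)
  hence pos: "f R b > 0" using ne by (auto simp: lotteries_def less_le)
  have z: "0 \<in> agents n" using n by (auto simp: agents_def)
  have ab: "a \<noteq> b" using pref z by auto
  define p where "p = (\<lambda>x. if x = a then f R a + f R b else if x = b then 0 else f R x)"
  have shift: "\<forall>x. p x = f R x + (if x = a then f R b else 0) - (if x = b then f R b else 0)"
    using ab by (auto simp: p_def)
  have plot: "p \<in> lotteries (alts m)"
  proof -
    have "\<forall>x. 0 \<le> p x" using lot by (auto simp: p_def lotteries_def)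
    moreover have "\<forall>x. x \<notin> alts m \<longrightarrow> p x = 0" using lot a b by (auto simp: p_def lotteries_def)
    moreover have "sum p (alts m) = 1"
    proof -
      have "sum p (alts m) = (\<Sum>x\<in>alts m. f R x + (if x = a then f R b else 0) - (if x = b then f R b else 0))"
        using shift by simp
      also have "\<dots> = sum (f R) (alts m)" using a b by (simp add: sum_subtractf sum.distrib)
      finally show ?thesis using lot by (simp add: lotteries_def)
    qed
    ultimately show ?thesis by (simp add: lotteries_def)
  qed
  have H: "\<forall>U. util_rep (agents n) (alts m) U \<longrightarrow>
      (\<exists>p\<in>lotteries (alts m). u_dominates (agents n) (alts m) U R p (f R))"
  proof (intro allI impI)
    fix U assume U: "util_rep (agents n) (alts m) U"
    have gt: "EU (alts m) (U R i) p > EU (alts m) (U R i) (f R)" if i: "i \<in> agents n" for i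
    proof -
      have c: "consistent (alts m) (R i) (U R i)" using U R i by (simp add: util_rep_def)
      have "\<not> U R i a \<le> U R i b" using c pref i a b unfolding consistent_def by blast
      hence "U R i a > U R i b" by simp
      moreover have "EU (alts m) (U R i) p = EU (alts m) (U R i) (f R) + f R b * (U R i a - U R i b)"
        by (rule EU_shift) (use a b shift in auto)
      ultimately show ?thesis using pos by simp
    qed
    have "u_dominates (agents n) (alts m) U R p (f R)"
      unfolding u_dominates_def using gt z by (blast intro: less_imp_le)
    then show "\<exists>p\<in>lotteries (alts m). u_dominates (agents n) (alts m) U R p (f R)"
      using plot by blast
  qed
  have "\<not> efficient (agents n) (alts m) f" unfolding efficient_def using R H by blast
  then show False using f by (simp add: good_sds_def)
qed


definition extN :: "nat \<Rightarrow> nat \<Rightarrow> nat \<Rightarrow> profile \<Rightarrow> profile" where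
  "extN m n' n R = (\<lambda>i. if i < n' then R i else if i < n then alts m \<times> alts m else {})"

lemma weak_pref_full: "weak_pref A (A \<times> A)"
  by (auto simp: weak_pref_def trans_def)

lemma extN_prof:
  assumes "n' \<le> n" "R \<in> profiles (agents n') (alts m)"
  shows "extN m n' n R \<in> profiles (agents n) (alts m)"
  using assms weak_pref_full[of "alts m"] unfolding profiles_def extN_def agents_def
  by auto

lemma extN_upd:
  assumes "i < n'" shows "extN m n' n (R(i := r)) = (extN m n' n R)(i := r)"
  using assms by (auto simp: extN_def fun_eq_iff)

lemma util_rep_extN:
  assumes "n' \<le> n" "util_rep (agents n) (alts m) U"
  shows "util_rep (agents n') (alts m) (\<lambda>R i. U (extN m n' n R) i)"
  unfolding util_rep_def
proof (intro ballI)
  fix R i assume R: "R \<in> profiles (agents n') (alts m)" and i: "i \<in> agents n'"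
  have "extN m n' n R \<in> profiles (agents n) (alts m)" using extN_prof[OF assms(1) R] .
  moreover have "i \<in> agents n" using i assms(1) by (auto simp: agents_def)
  ultimately have "consistent (alts m) (extN m n' n R i) (U (extN m n' n R) i)"
    using assms(2) by (simp add: util_rep_def)
  moreover have "extN m n' n R i = R i" using i by (simp add: extN_def agents_def)
  ultimately show "consistent (alts m) (R i) (U (extN m n' n R) i)" by simp
qed

lemma reduce_agents:
  assumes f: "good_sds m n f" and nn: "n' \<le> n"
  shows "good_sds m n' (\<lambda>R. f (extN m n' n R))"
proof -
  let ?N = "agents n" and ?N' = "agents n'" and ?A = "alts m"
  let ?f = "\<lambda>R. f (extN m n' n R)"
  have NN: "?N' \<subseteq> ?N" using nn by (auto simp: agents_def)
  have sds: "is_sds ?N ?A f" and an: "anonymous ?N ?A f" and ne: "neutral ?N ?A f"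
    and ef: "efficient ?N ?A f" and sp: "strategyproof ?N ?A f" using f by (auto simp: good_sds_def)
  have 1: "is_sds ?N' ?A ?f"
    using sds extN_prof[OF nn] by (auto simp: is_sds_def)
  have 2: "anonymous ?N' ?A ?f"
    unfolding anonymous_def
  proof (intro ballI allI impI)
    fix R \<sigma> assume R: "R \<in> profiles ?N' ?A" and s: "\<sigma> permutes ?N'"
    have eq: "extN m n' n (R \<circ> \<sigma>) = extN m n' n R \<circ> \<sigma>"
    proof
      fix i
      show "extN m n' n (R \<circ> \<sigma>) i = (extN m n' n R \<circ> \<sigma>) i"
      proof (cases "i < n'")
        case True
        then have "\<sigma> i < n'" using permutes_in_image[OF s, of i] by (simp add: agents_def)
        then show ?thesis using True by (simp add: extN_def)
      next
        case False
        then have "\<sigma> i = i" using permutes_not_in[OF s, of i] by (simp add: agents_def)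
        then show ?thesis using False by (simp add: extN_def)
      qed
    qed
    have "\<sigma> permutes ?N" using permutes_subset[OF s NN] .
    then show "?f (R \<circ> \<sigma>) = ?f R" using an extN_prof[OF nn R] eq by (simp add: anonymous_def)
  qed
  have 3: "neutral ?N' ?A ?f"
    unfolding neutral_def
  proof (intro ballI allI impI)
    fix R \<pi> x assume R: "R \<in> profiles ?N' ?A" and p: "\<pi> permutes ?A" and x: "x \<in> ?A"
    have eq: "permute_profile \<pi> (extN m n' n R) = extN m n' n (permute_profile \<pi> R)"
    proof
      fix i
      have "map_prod \<pi> \<pi> ` (?A \<times> ?A) = ?A \<times> ?A"
        by (rule map_prod_surj_on) (simp_all add: permutes_image[OF p])
      then show "permute_profile \<pi> (extN m n' n R) i = extN m n' n (permute_profile \<pi> R) i"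
        by (simp add: permute_profile_def extN_def)
    qed
    show "?f R x = ?f (permute_profile \<pi> R) (\<pi> x)"
      using ne extN_prof[OF nn R] p x eq unfolding neutral_def by metis
  qed
  have 4: "efficient ?N' ?A ?f"
    unfolding efficient_def
  proof
    assume "\<exists>R\<in>profiles ?N' ?A. \<forall>U. util_rep ?N' ?A U \<longrightarrow> (\<exists>p\<in>lotteries ?A. u_dominates ?N' ?A U R p (?f R))"
    then obtain R where R: "R \<in> profiles ?N' ?A"
      and H: "\<forall>U. util_rep ?N' ?A U \<longrightarrow> (\<exists>p\<in>lotteries ?A. u_dominates ?N' ?A U R p (?f R))" by blast
    let ?R = "extN m n' n R"
    have "\<forall>U. util_rep ?N ?A U \<longrightarrow> (\<exists>p\<in>lotteries ?A. u_dominates ?N ?A U ?R p (f ?R))"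
    proof (intro allI impI)
      fix U assume U: "util_rep ?N ?A U"
      obtain p where p: "p \<in> lotteries ?A" and d: "u_dominates ?N' ?A (\<lambda>R i. U (extN m n' n R) i) R p (?f R)"
        using H util_rep_extN[OF nn U] by blast
      have RR: "?R \<in> profiles ?N ?A" using extN_prof[OF nn R] .
      have fl: "f ?R \<in> lotteries ?A" using sds RR by (simp add: is_sds_def)
      have ge: "EU ?A (U ?R i) p \<ge> EU ?A (U ?R i) (f ?R)" if i: "i \<in> ?N" for i
      proof (cases "i < n'")
        case True
        then show ?thesis using d by (simp add: u_dominates_def agents_def)
      next
        case False
        have "consistent ?A (?R i) (U ?R i)" using U RR i by (simp add: util_rep_def)
        moreover have "?R i = ?A \<times> ?A" using False i by (simp add: extN_def agents_def)
        ultimately have "\<forall>x\<in>?A. \<forall>y\<in>?A. U ?R i x = U ?R i y"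
          unfolding consistent_def by (auto intro: order.antisym)
        then show ?thesis using EU_indiff p fl by (metis order.refl)
      qed
      have "\<exists>i\<in>?N. EU ?A (U ?R i) p > EU ?A (U ?R i) (f ?R)"
        using d NN by (auto simp: u_dominates_def)
      then show "\<exists>p\<in>lotteries ?A. u_dominates ?N ?A U ?R p (f ?R)"
        using ge p unfolding u_dominates_def by blast
    qed
    then have "\<not> efficient ?N ?A f" unfolding efficient_def using extN_prof[OF nn R] by blast
    then show False using ef by simp
  qed
  have 5: "strategyproof ?N' ?A ?f"
    unfolding strategyproof_def manipulable_def
  proof
    assume "\<exists>R\<in>profiles ?N' ?A. \<exists>i\<in>?N'. \<exists>r. weak_pref ?A r \<and>
      (\<forall>U. util_rep ?N' ?A U \<longrightarrow> EU ?A (U R i) (?f (R(i := r))) > EU ?A (U R i) (?f R))"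
    then obtain R i r where R: "R \<in> profiles ?N' ?A" and i: "i \<in> ?N'" and r: "weak_pref ?A r"
      and H: "\<forall>U. util_rep ?N' ?A U \<longrightarrow> EU ?A (U R i) (?f (R(i := r))) > EU ?A (U R i) (?f R)" by blast
    let ?R = "extN m n' n R"
    have upd: "extN m n' n (R(i := r)) = ?R(i := r)" using i extN_upd by (simp add: agents_def)
    have "\<forall>U. util_rep ?N ?A U \<longrightarrow> EU ?A (U ?R i) (f (?R(i := r))) > EU ?A (U ?R i) (f ?R)"
    proof (intro allI impI)
      fix U assume U: "util_rep ?N ?A U"
      show "EU ?A (U ?R i) (f (?R(i := r))) > EU ?A (U ?R i) (f ?R)"
        using H util_rep_extN[OF nn U] upd by fastforce
    qed
    moreover have "i \<in> ?N" using i NN by blast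
    ultimately have "manipulable ?N ?A f" unfolding manipulable_def using extN_prof[OF nn R] r by blast
    then show False using sp by (simp add: strategyproof_def)
  qed
  show ?thesis using 1 2 3 4 5 by (simp add: good_sds_def)
qed


definition extA :: "nat \<Rightarrow> nat \<Rightarrow> nat \<Rightarrow> profile \<Rightarrow> profile" where
  "extA m' m n R = (\<lambda>i. if i < n then R i \<union> (alts m \<times> (alts m - alts m')) else {})"

lemma weak_pref_ext:
  assumes "weak_pref A' r" "A' \<subseteq> A"
  shows "weak_pref A (r \<union> (A \<times> (A - A')))"
proof -
  have sub: "r \<subseteq> A' \<times> A'" and comp: "\<forall>x\<in>A'. \<forall>y\<in>A'. (x,y) \<in> r \<or> (y,x) \<in> r" and tr: "trans r"
    using assms(1) by (auto simp: weak_pref_def)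
  have "r \<union> (A \<times> (A - A')) \<subseteq> A \<times> A" using sub assms(2) by blast
  moreover have "\<forall>x\<in>A. \<forall>y\<in>A. (x,y) \<in> r \<union> (A \<times> (A - A')) \<or> (y,x) \<in> r \<union> (A \<times> (A - A'))"
    using comp by blast
  moreover have "trans (r \<union> (A \<times> (A - A')))"
  proof (rule transI)
    fix x y z assume xy: "(x,y) \<in> r \<union> (A \<times> (A - A'))" and yz: "(y,z) \<in> r \<union> (A \<times> (A - A'))"
    have xA: "x \<in> A" using xy sub assms(2) by blast
    show "(x,z) \<in> r \<union> (A \<times> (A - A'))"
    proof (cases "z \<in> A'")
      case False
      then show ?thesis using xA yz sub assms(2) by blast
    next
      case True
      then have "(y,z) \<in> r" using yz by blast
      then have "y \<in> A'" using sub by blast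
      then have "(x,y) \<in> r" using xy by blast
      then show ?thesis using \<open>(y,z) \<in> r\<close> tr by (meson UnI1 transD)
    qed
  qed
  ultimately show ?thesis by (simp add: weak_pref_def)
qed

lemma extA_prof:
  assumes "m' \<le> m" "R \<in> profiles (agents n) (alts m')"
  shows "extA m' m n R \<in> profiles (agents n) (alts m)"
  using assms weak_pref_ext[of "alts m'" _ "alts m"] alts_mono[OF assms(1)]
  unfolding profiles_def extA_def agents_def by auto

lemma extA_upd:
  assumes "i < n" shows "extA m' m n (R(i := r)) = (extA m' m n R)(i := r \<union> (alts m \<times> (alts m - alts m')))"
  using assms by (auto simp: extA_def fun_eq_iff)

lemma util_rep_extA:
  assumes "m' \<le> m" "util_rep (agents n) (alts m) U"
  shows "util_rep (agents n) (alts m') (\<lambda>R i. U (extA m' m n R) i)"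
  unfolding util_rep_def
proof (intro ballI)
  fix R i assume R: "R \<in> profiles (agents n) (alts m')" and i: "i \<in> agents n"
  have "extA m' m n R \<in> profiles (agents n) (alts m)" using extA_prof[OF assms(1) R] .
  then have c: "consistent (alts m) (extA m' m n R i) (U (extA m' m n R) i)"
    using assms(2) i by (simp add: util_rep_def)
  have e: "extA m' m n R i = R i \<union> (alts m \<times> (alts m - alts m'))" using i by (simp add: extA_def agents_def)
  show "consistent (alts m') (R i) (U (extA m' m n R) i)"
    using c alts_mono[OF assms(1)] unfolding consistent_def e by blast
qed

lemma extA_zero:
  assumes f: "good_sds m n f" and n: "n \<ge> 1" and mm: "1 \<le> m'" "m' \<le> m"
    and R: "R \<in> profiles (agents n) (alts m')" and b: "b \<in> alts m - alts m'"
  shows "f (extA m' m n R) b = 0"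
proof (rule zero_mass[OF f n extA_prof[OF mm(2) R], of 0])
  show "0 \<in> alts m" using mm by (simp add: alts_def)
  show "b \<in> alts m" using b by blast
  have "0 \<in> alts m'" using mm by (simp add: alts_def)
  moreover have "R i \<subseteq> alts m' \<times> alts m'" if "i \<in> agents n" for i
    using R that by (auto simp: profiles_def weak_pref_def)
  ultimately show "\<forall>i\<in>agents n. (0, b) \<in> extA m' m n R i \<and> (b, 0) \<notin> extA m' m n R i"
    using b mm by (auto simp: extA_def agents_def alts_def) (use less_le_trans in fastforce)
qed


lemma reduce_alts:
  assumes f: "good_sds m n f" and n: "n \<ge> 1" and mm: "1 \<le> m'" "m' \<le> m"
  shows "good_sds m' n (\<lambda>R x. if x \<in> alts m' then f (extA m' m n R) x else 0)"
proof -
  let ?N = "agents n" and ?A' = "alts m'" and ?A = "alts m"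
  let ?e = "extA m' m n"
  let ?f = "\<lambda>R x. if x \<in> alts m' then f (extA m' m n R) x else 0"
  have AA: "?A' \<subseteq> ?A" using alts_mono[OF mm(2)] .
  have sds: "is_sds ?N ?A f" and an: "anonymous ?N ?A f" and ne: "neutral ?N ?A f"
    and ef: "efficient ?N ?A f" and sp: "strategyproof ?N ?A f" using f by (auto simp: good_sds_def)
  have ep: "R \<in> profiles ?N ?A' \<Longrightarrow> ?e R \<in> profiles ?N ?A" for R using extA_prof[OF mm(2)] .
  have zero: "R \<in> profiles ?N ?A' \<Longrightarrow> \<forall>b\<in>?A - ?A'. f (?e R) b = 0" for R
    using extA_zero[OF f n mm] by blast
  have flot: "R \<in> profiles ?N ?A' \<Longrightarrow> f (?e R) \<in> lotteries ?A" for R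
    using sds ep by (simp add: is_sds_def)
  have EUeq: "R \<in> profiles ?N ?A' \<Longrightarrow> EU ?A u (f (?e R)) = EU ?A' u (?f R)" for R u
    by (rule EU_restrict) (use AA zero in auto)
  have 1: "is_sds ?N ?A' ?f"
    unfolding is_sds_def
  proof
    fix R assume R: "R \<in> profiles ?N ?A'"
    have l: "f (?e R) \<in> lotteries ?A" using flot[OF R] .
    have "sum (?f R) ?A' = sum (f (?e R)) ?A'" by simp
    also have "\<dots> = sum (f (?e R)) ?A"
      by (rule sum.mono_neutral_left) (use AA zero[OF R] in auto)
    also have "\<dots> = 1" using l by (simp add: lotteries_def)
    finally show "?f R \<in> lotteries ?A'" using l by (auto simp: lotteries_def)
  qed
  have 2: "anonymous ?N ?A' ?f"
    unfolding anonymous_def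
  proof (intro ballI allI impI)
    fix R \<sigma> assume R: "R \<in> profiles ?N ?A'" and s: "\<sigma> permutes ?N"
    have eq: "?e (R \<circ> \<sigma>) = ?e R \<circ> \<sigma>"
    proof
      fix i
      show "?e (R \<circ> \<sigma>) i = (?e R \<circ> \<sigma>) i"
      proof (cases "i < n")
        case True
        then have "\<sigma> i < n" using permutes_in_image[OF s, of i] by (simp add: agents_def)
        then show ?thesis using True by (simp add: extA_def)
      next
        case False
        then have "\<sigma> i = i" using permutes_not_in[OF s, of i] by (simp add: agents_def)
        then show ?thesis using False by (simp add: extA_def)
      qed
    qed
    have "f (?e (R \<circ> \<sigma>)) = f (?e R)" using an ep[OF R] s eq by (simp add: anonymous_def)
    then show "?f (R \<circ> \<sigma>) = ?f R" by (simp only:)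
  qed
  have 3: "neutral ?N ?A' ?f"
    unfolding neutral_def
  proof (intro ballI allI impI)
    fix R \<pi> x assume R: "R \<in> profiles ?N ?A'" and p: "\<pi> permutes ?A'" and x: "x \<in> ?A'"
    have pA: "\<pi> permutes ?A" using permutes_subset[OF p AA] .
    have eq: "permute_profile \<pi> (?e R) = ?e (permute_profile \<pi> R)"
    proof
      fix i
      have "\<pi> ` (?A - ?A') = ?A - ?A'"
      proof -
        have "\<forall>y\<in>?A - ?A'. \<pi> y = y" using permutes_not_in[OF p] by blast
        then show ?thesis by force
      qed
      then have "map_prod \<pi> \<pi> ` (?A \<times> (?A - ?A')) = ?A \<times> (?A - ?A')"
        by (intro map_prod_surj_on) (simp_all add: permutes_image[OF pA])
      then show "permute_profile \<pi> (?e R) i = ?e (permute_profile \<pi> R) i"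
        by (simp add: permute_profile_def extA_def image_Un)
    qed
    have px: "\<pi> x \<in> ?A'" using x permutes_in_image[OF p] by blast
    have "f (?e R) x = f (permute_profile \<pi> (?e R)) (\<pi> x)"
      using ne ep[OF R] pA x AA unfolding neutral_def by blast
    then show "?f R x = ?f (permute_profile \<pi> R) (\<pi> x)" using eq x px by simp
  qed
  have 4: "efficient ?N ?A' ?f"
    unfolding efficient_def
  proof
    assume "\<exists>R\<in>profiles ?N ?A'. \<forall>U. util_rep ?N ?A' U \<longrightarrow> (\<exists>p\<in>lotteries ?A'. u_dominates ?N ?A' U R p (?f R))"
    then obtain R where R: "R \<in> profiles ?N ?A'"
      and H: "\<forall>U. util_rep ?N ?A' U \<longrightarrow> (\<exists>p\<in>lotteries ?A'. u_dominates ?N ?A' U R p (?f R))" by blast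
    let ?R = "?e R"
    have "\<forall>U. util_rep ?N ?A U \<longrightarrow> (\<exists>p\<in>lotteries ?A. u_dominates ?N ?A U ?R p (f ?R))"
    proof (intro allI impI)
      fix U assume U: "util_rep ?N ?A U"
      obtain p where p: "p \<in> lotteries ?A'" and d: "u_dominates ?N ?A' (\<lambda>R i. U (?e R) i) R p (?f R)"
        using H util_rep_extA[OF mm(2) U] by blast
      have pz: "\<forall>x\<in>?A - ?A'. p x = 0" using p by (auto simp: lotteries_def)
      have pl: "p \<in> lotteries ?A"
      proof -
        have "sum p ?A = sum p ?A'" by (rule sum.mono_neutral_right) (use AA pz in auto)
        then show ?thesis using p AA by (auto simp: lotteries_def)
      qed
      have EUp: "EU ?A u p = EU ?A' u p" for u by (rule EU_restrict) (use AA pz in auto)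
      have "u_dominates ?N ?A U ?R p (f ?R)"
        using d unfolding u_dominates_def EUp EUeq[OF R] .
      then show "\<exists>p\<in>lotteries ?A. u_dominates ?N ?A U ?R p (f ?R)" using pl by blast
    qed
    then have "\<not> efficient ?N ?A f" unfolding efficient_def using ep[OF R] by blast
    then show False using ef by simp
  qed
  have 5: "strategyproof ?N ?A' ?f"
    unfolding strategyproof_def manipulable_def
  proof
    assume "\<exists>R\<in>profiles ?N ?A'. \<exists>i\<in>?N. \<exists>r. weak_pref ?A' r \<and>
      (\<forall>U. util_rep ?N ?A' U \<longrightarrow> EU ?A' (U R i) (?f (R(i := r))) > EU ?A' (U R i) (?f R))"
    then obtain R i r where R: "R \<in> profiles ?N ?A'" and i: "i \<in> ?N" and r: "weak_pref ?A' r"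
      and H: "\<forall>U. util_rep ?N ?A' U \<longrightarrow> EU ?A' (U R i) (?f (R(i := r))) > EU ?A' (U R i) (?f R)" by blast
    let ?R = "?e R" and ?r = "r \<union> (?A \<times> (?A - ?A'))"
    have upd: "?e (R(i := r)) = ?R(i := ?r)" using i extA_upd by (simp add: agents_def)
    have R2: "R(i := r) \<in> profiles ?N ?A'" using R r i by (auto simp: profiles_def)
    have "\<forall>U. util_rep ?N ?A U \<longrightarrow> EU ?A (U ?R i) (f (?R(i := ?r))) > EU ?A (U ?R i) (f ?R)"
    proof (intro allI impI)
      fix U assume U: "util_rep ?N ?A U"
      have "EU ?A' (U ?R i) (?f (R(i := r))) > EU ?A' (U ?R i) (?f R)"
        using H util_rep_extA[OF mm(2) U] by fastforce
      moreover have "EU ?A (U ?R i) (f (?R(i := ?r))) = EU ?A' (U ?R i) (?f (R(i := r)))"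
        using EUeq[OF R2, of "U ?R i"] upd by (simp only:)
      moreover have "EU ?A (U ?R i) (f ?R) = EU ?A' (U ?R i) (?f R)" using EUeq[OF R] .
      ultimately show "EU ?A (U ?R i) (f (?R(i := ?r))) > EU ?A (U ?R i) (f ?R)" by simp
    qed
    moreover have "weak_pref ?A ?r" using weak_pref_ext[OF r AA] .
    ultimately have "manipulable ?N ?A f" unfolding manipulable_def using ep[OF R] i by blast
    then show False using sp by (simp add: strategyproof_def)
  qed
  show ?thesis using 1 2 3 4 5 by (simp add: good_sds_def)
qed

lemma zero_agents:
  assumes "1 \<le> m'"
  shows "good_sds m' 0 (\<lambda>R x. if x \<in> alts m' then 1 / real m' else 0)"
proof -
  have a0: "agents 0 = {}" by (simp add: agents_def)
  have l: "(\<lambda>x. if x \<in> alts m' then 1 / real m' else 0) \<in> lotteries (alts m')"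
    using assms by (simp add: lotteries_def alts_def)
  have n: "neutral (agents 0) (alts m') (\<lambda>R x. if x \<in> alts m' then 1 / real m' else 0)"
    unfolding neutral_def by (auto simp: permutes_in_image)
  have e: "efficient (agents 0) (alts m') (\<lambda>R x. if x \<in> alts m' then 1 / real m' else 0)"
    unfolding efficient_def u_dominates_def a0 util_rep_def by blast
  show ?thesis using l n e
    by (simp add: good_sds_def is_sds_def anonymous_def strategyproof_def manipulable_def a0)
qed

theorem lemma4p1:
  fixes m n m' n' :: nat
  assumes "\<exists>f. good_sds m n f"
    and "1 \<le> m'" and "m' \<le> m" and "n' \<le> n"
  shows "\<exists>f'. good_sds m' n' f'"
proof (cases "n' = 0")
  case True
  then show ?thesis using zero_agents[OF assms(2)] by blast
next
  case False
  then have n: "n \<ge> 1" using assms(4) by simp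
  obtain f where f: "good_sds m n f" using assms(1) by blast
  have "good_sds m' n (\<lambda>R x. if x \<in> alts m' then f (extA m' m n R) x else 0)"
    using reduce_alts[OF f n assms(2,3)] .
  from reduce_agents[OF this assms(4)] show ?thesis by blast
qed

end
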